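(* Let $\mathbb{F}$ be any field. There exists a family $\{P_d\}$ of polynomials in $\mathsf{VNP}$, where $P_d$ has degree $d$ and is in $n = \mathrm{poly}(d)$ variables, such that any $\Sigma\Pi\Sigma$ circuit over $\mathbb{F}$ of formal degree $d$ which is functionally equivalent to $P_d$ over $\{0,1\}^n$ has size at least $\exp(\Omega(d\log n))$.
   Context: A $\Sigma\Pi\Sigma$ (depth-3) circuit over $\mathbb{F}$ computes an expression $\sum_{i=1}^{s}\prod_{j=1}^{d_i} L_{i,j}(\mathbf{x})$ where each $L_{i,j}$ is an affine form in the variables $x_1,\dots,x_n$; its formal degree is $\max_i d_i$, and its size is at least its top fan-in $s$. A circuit $C$ is functionally equivalent to a polynomial $P\in\mathbb{F}[x_1,\dots,x_n]$ over $\{0,1\}^n$ if $C(\mathbf{x})=P(\mathbf{x})$ for every $\mathbf{x}\in\{0,1\}^n$ (as opposed to $C\equiv P$ as formal polynomials). $\mathsf{VNP}$ denotes Valiant's class of families of polynomials that are explicit in the algebraic sense (families of the form $P_n(\mathbf{x})=\sum_{\mathbf{b}\in\{0,1\}^{m}} g_n(\mathbf{x},\mathbf{b})$ with $m=\mathrm{poly}(n)$ and $\{g_n\}$ computable by polynomial-size arithmetic circuits of polynomial degree). *)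

theory Defs
  imports Complex_Main "HOL-Library.Poly_Mapping"
begin

text \<open>A monomial is a finitely supported exponent vector nat =>0 nat;
  a polynomial is a finitely supported map from monomials to coefficients.\<close>

type_synonym 'a mpoly = "(nat \<Rightarrow>\<^sub>0 nat) \<Rightarrow>\<^sub>0 'a"

definition mvar :: "nat \<Rightarrow> 'a::comm_ring_1 mpoly" where
  "mvar i = Poly_Mapping.single (Poly_Mapping.single i 1) 1"

definition mconst :: "'a::comm_ring_1 \<Rightarrow> 'a mpoly" where
  "mconst c = Poly_Mapping.single 0 c"

definition mon_degree :: "(nat \<Rightarrow>\<^sub>0 nat) \<Rightarrow> nat" where
  "mon_degree m = (\<Sum>i\<in>Poly_Mapping.keys m. Poly_Mapping.lookup m i)"

text \<open>Total degree (degree of the zero polynomial is 0).\<close>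
definition total_degree :: "'a::zero mpoly \<Rightarrow> nat" where
  "total_degree p = Max (insert 0 (mon_degree ` Poly_Mapping.keys p))"

definition mvars :: "'a::zero mpoly \<Rightarrow> nat set" where
  "mvars p = (\<Union>m\<in>Poly_Mapping.keys p. Poly_Mapping.keys m)"

definition meval :: "'a::comm_ring_1 mpoly \<Rightarrow> (nat \<Rightarrow> 'a) \<Rightarrow> 'a" where
  "meval p x = (\<Sum>m\<in>Poly_Mapping.keys p. Poly_Mapping.lookup p m * (\<Prod>i\<in>Poly_Mapping.keys m. x i ^ Poly_Mapping.lookup m i))"

text \<open>Gate k may refer to gates with smaller index; references to
  non-existing gates evaluate to 0. The output is the last gate.
  The size of a circuit is its number of gates.\<close>

datatype 'a gate = Inp nat | Cst 'a | Add nat nat | Mul nat nat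

fun gate_val :: "(nat \<Rightarrow> 'a::comm_ring_1 mpoly) \<Rightarrow> 'a mpoly list \<Rightarrow> 'a gate \<Rightarrow> 'a mpoly" where
  "gate_val env vs (Inp i) = env i"
| "gate_val env vs (Cst c) = mconst c"
| "gate_val env vs (Add i j) =
     (if i < length vs \<and> j < length vs then vs ! i + vs ! j else 0)"
| "gate_val env vs (Mul i j) =
     (if i < length vs \<and> j < length vs then vs ! i * vs ! j else 0)"

definition circuit_vals :: "(nat \<Rightarrow> 'a::comm_ring_1 mpoly) \<Rightarrow> 'a gate list \<Rightarrow> 'a mpoly list" where
  "circuit_vals env gs = foldl (\<lambda>vs g. vs @ [gate_val env vs g]) [] gs"

definition circuit_poly :: "(nat \<Rightarrow> 'a::comm_ring_1 mpoly) \<Rightarrow> 'a gate list \<Rightarrow> 'a mpoly" where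
  "circuit_poly env gs = (if gs = [] then 0 else last (circuit_vals env gs))"

definition circuit_size :: "'a gate list \<Rightarrow> nat" where
  "circuit_size gs = length gs"

definition bool_vecs :: "nat \<Rightarrow> (nat \<Rightarrow> bool) set" where
  "bool_vecs m = {b. \<forall>i\<ge>m. \<not> b i}"

text \<open>P d is a polynomial in the variables x_0..x_{nv d - 1}. Variable x_i of g_d is
  input i < nv d, and y_j is input nv d + j.\<close>
definition in_VNP :: "(nat \<Rightarrow> nat) \<Rightarrow> (nat \<Rightarrow> 'a::comm_ring_1 mpoly) \<Rightarrow> bool" where
  "in_VNP nv P \<longleftrightarrow>
     (\<exists>k::nat. \<exists>m :: nat \<Rightarrow> nat. \<exists>G :: nat \<Rightarrow> 'a gate list. \<forall>d.
        nv d \<le> (d + 1) ^ k \<and>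
        m d \<le> (d + 1) ^ k \<and>
        circuit_size (G d) \<le> (d + 1) ^ k \<and>
        total_degree (circuit_poly mvar (G d)) \<le> (d + 1) ^ k \<and>
        P d = (\<Sum>b\<in>bool_vecs (m d).
                 circuit_poly (\<lambda>i. if i < nv d then mvar i
                                    else if b (i - nv d) then 1 else 0) (G d)))"

text \<open>An affine form in x_0..x_{n-1} is (c, a) standing for
  c + a 0 * x_0 + ... + a (n-1) * x_(n-1). A Sigma Pi Sigma circuit is a list
  (the top sum) of lists (the products) of affine forms.\<close>

type_synonym 'a affine = "'a \<times> (nat \<Rightarrow> 'a)"
type_synonym 'a sps = "'a affine list list"

definition affine_eval :: "nat \<Rightarrow> 'a::comm_ring_1 affine \<Rightarrow> (nat \<Rightarrow> 'a) \<Rightarrow> 'a" where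
  "affine_eval n L x = fst L + (\<Sum>i<n. snd L i * x i)"

definition sps_eval :: "nat \<Rightarrow> 'a::comm_ring_1 sps \<Rightarrow> (nat \<Rightarrow> 'a) \<Rightarrow> 'a" where
  "sps_eval n C x = (\<Sum>p\<leftarrow>C. \<Prod>L\<leftarrow>p. affine_eval n L x)"

text \<open>Formal degree: maximum fan-in of the product gates.\<close>
definition sps_formal_degree :: "'a sps \<Rightarrow> nat" where
  "sps_formal_degree C = Max (insert 0 (length ` set C))"

text \<open>Size: number of gates (output sum gate, s product gates and one
  sum gate per affine form); it is at least the top fan-in s.\<close>
definition sps_size :: "'a sps \<Rightarrow> nat" where
  "sps_size C = 1 + length C + (\<Sum>p\<leftarrow>C. length p)"

definition functionally_equiv :: "nat \<Rightarrow> 'a::comm_ring_1 sps \<Rightarrow> 'a mpoly \<Rightarrow> bool" where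
  "functionally_equiv n C P \<longleftrightarrow>
     (\<forall>x. (\<forall>i. x i \<in> {0, 1}) \<longrightarrow> sps_eval n C x = meval P x)"

end

theory Submission
  imports Defs "HOL-Library.FuncSet" "HOL-Library.Function_Algebras"
begin


definition mmono :: "(nat \<Rightarrow>\<^sub>0 nat) \<Rightarrow> (nat \<Rightarrow> 'a::comm_ring_1) \<Rightarrow> 'a" where
  "mmono m x = (\<Prod>i\<in>Poly_Mapping.keys m. x i ^ Poly_Mapping.lookup m i)"

lemma mmono_K:
  assumes "finite K" "Poly_Mapping.keys m \<subseteq> K"
  shows "mmono m x = (\<Prod>i\<in>K. x i ^ Poly_Mapping.lookup m i)"
  unfolding mmono_def
  by (rule prod.mono_neutral_left) (use assms in \<open>auto simp: in_keys_iff\<close>)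

lemma mmono_add: "mmono (a + b) x = mmono a x * mmono b x"
proof -
  let ?K = "Poly_Mapping.keys a \<union> Poly_Mapping.keys b"
  have f: "finite ?K" by simp
  have "mmono (a+b) x = (\<Prod>i\<in>?K. x i ^ Poly_Mapping.lookup (a+b) i)"
    by (rule mmono_K[OF f]) (rule keys_add)
  also have "\<dots> = (\<Prod>i\<in>?K. x i ^ Poly_Mapping.lookup a i) * (\<Prod>i\<in>?K. x i ^ Poly_Mapping.lookup b i)"
    by (simp add: lookup_add power_add prod.distrib)
  also have "\<dots> = mmono a x * mmono b x"
    by (simp add: mmono_K[OF f, symmetric])
  finally show ?thesis .
qed

lemma mmono_zero: "mmono 0 x = 1" by (simp add: mmono_def)

lemma mmono_single: "mmono (Poly_Mapping.single i 1) x = x i"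
  by (simp add: mmono_def)

lemma mmono_sum: "finite J \<Longrightarrow> mmono (\<Sum>j\<in>J. f j) x = (\<Prod>j\<in>J. mmono (f j) x)"
  by (induction J rule: finite_induct) (auto simp: mmono_zero mmono_add)

lemma meval_K:
  assumes "finite K" "Poly_Mapping.keys p \<subseteq> K"
  shows "meval p x = (\<Sum>m\<in>K. Poly_Mapping.lookup p m * mmono m x)"
  unfolding meval_def mmono_def
  by (rule sum.mono_neutral_left) (use assms in \<open>auto simp: in_keys_iff\<close>)

lemma meval_add: "meval (p + q) x = meval p x + meval q x"
proof -
  let ?K = "Poly_Mapping.keys p \<union> Poly_Mapping.keys q"
  have f: "finite ?K" by simp
  have "meval (p+q) x = (\<Sum>m\<in>?K. Poly_Mapping.lookup (p+q) m * mmono m x)"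
    by (rule meval_K[OF f]) (rule keys_add)
  also have "\<dots> = (\<Sum>m\<in>?K. Poly_Mapping.lookup p m * mmono m x) + (\<Sum>m\<in>?K. Poly_Mapping.lookup q m * mmono m x)"
    by (simp add: lookup_add distrib_right sum.distrib)
  also have "\<dots> = meval p x + meval q x"
    by (simp add: meval_K[OF f, symmetric])
  finally show ?thesis .
qed

lemma meval_zero: "meval 0 x = 0" by (simp add: meval_def)

lemma meval_single: "meval (Poly_Mapping.single m c) x = c * mmono m x"
  by (subst meval_K[of "{m}"]) (auto simp: lookup_single)

lemma meval_sum: "finite J \<Longrightarrow> meval (\<Sum>j\<in>J. f j) x = (\<Sum>j\<in>J. meval (f j) x)"
  by (induction J rule: finite_induct) (auto simp: meval_zero meval_add)

lemma mon_degree_K: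
  assumes "finite K" "Poly_Mapping.keys m \<subseteq> K"
  shows "mon_degree m = (\<Sum>i\<in>K. Poly_Mapping.lookup m i)"
  unfolding mon_degree_def
  by (rule sum.mono_neutral_left) (use assms in \<open>auto simp: in_keys_iff\<close>)

lemma mon_degree_add: "mon_degree (a + b) = mon_degree a + mon_degree b"
proof -
  let ?K = "Poly_Mapping.keys a \<union> Poly_Mapping.keys b"
  have f: "finite ?K" by simp
  show ?thesis
    using mon_degree_K[OF f keys_add[of a b]] mon_degree_K[OF f, of a] mon_degree_K[OF f, of b]
    by (simp add: lookup_add sum.distrib)
qed

lemma mon_degree_zero: "mon_degree 0 = 0" by (simp add: mon_degree_def)
lemma mon_degree_single: "mon_degree (Poly_Mapping.single i (1::nat)) = 1" by (simp add: mon_degree_def)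
lemma mon_degree_sum: "finite J \<Longrightarrow> mon_degree (\<Sum>j\<in>J. f j) = (\<Sum>j\<in>J. mon_degree (f j))"
  by (induction J rule: finite_induct) (auto simp: mon_degree_zero mon_degree_add)




datatype 'a ex = V nat | K 'a | Pl "'a ex" "'a ex" | Ti "'a ex" "'a ex"

fun sem :: "(nat \<Rightarrow> 'a::comm_ring_1 mpoly) \<Rightarrow> 'a ex \<Rightarrow> 'a mpoly" where
  "sem env (V i) = env i"
| "sem env (K c) = mconst c"
| "sem env (Pl a b) = sem env a + sem env b"
| "sem env (Ti a b) = sem env a * sem env b"

fun cmpl :: "nat \<Rightarrow> 'a ex \<Rightarrow> 'a gate list" where
  "cmpl b (V i) = [Inp i]"
| "cmpl b (K c) = [Cst c]"
| "cmpl b (Pl e1 e2) = cmpl b e1 @ cmpl (b + length (cmpl b e1)) e2 @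
     [Add (b + length (cmpl b e1) - 1) (b + length (cmpl b e1) + length (cmpl (b + length (cmpl b e1)) e2) - 1)]"
| "cmpl b (Ti e1 e2) = cmpl b e1 @ cmpl (b + length (cmpl b e1)) e2 @
     [Mul (b + length (cmpl b e1) - 1) (b + length (cmpl b e1) + length (cmpl (b + length (cmpl b e1)) e2) - 1)]"

fun esize :: "'a ex \<Rightarrow> nat" where
  "esize (V i) = 1" | "esize (K c) = 1"
| "esize (Pl a b) = esize a + esize b + 1" | "esize (Ti a b) = esize a + esize b + 1"

lemma comp_len: "length (cmpl b e) = esize e"
  by (induction e arbitrary: b) auto

lemma esize_pos: "esize e > 0" by (cases e) auto

definition run :: "(nat \<Rightarrow> 'a::comm_ring_1 mpoly) \<Rightarrow> 'a mpoly list \<Rightarrow> 'a gate list \<Rightarrow> 'a mpoly list" where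
  "run env vs gs = foldl (\<lambda>vs g. vs @ [gate_val env vs g]) vs gs"

lemma run_append: "run env vs (g1 @ g2) = run env (run env vs g1) g2"
  by (simp add: run_def)

lemma run_single: "run env vs [g] = vs @ [gate_val env vs g]"
  by (simp add: run_def)

lemma comp_correct:
  "length vs = b \<Longrightarrow> \<exists>ws. run env vs (cmpl b e) = vs @ ws \<and> length ws = esize e \<and> last ws = sem env e"
proof (induction e arbitrary: b vs)
  case (V i) thus ?case by (simp add: run_single)
next
  case (K c) thus ?case by (simp add: run_single)
next
  case (Pl e1 e2)
  obtain ws1 where w1: "run env vs (cmpl b e1) = vs @ ws1" "length ws1 = esize e1" "last ws1 = sem env e1"
    using Pl.IH(1)[OF Pl.prems] by blast
  have l1: "length (vs @ ws1) = b + length (cmpl b e1)" using w1 Pl.prems by (simp add: comp_len)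
  obtain ws2 where w2: "run env (vs @ ws1) (cmpl (b + length (cmpl b e1)) e2) = vs @ ws1 @ ws2"
      "length ws2 = esize e2" "last ws2 = sem env e2"
    using Pl.IH(2)[OF l1] by auto
  have ne1: "ws1 \<noteq> []" using w1(2) esize_pos[of e1] by auto
  have ne2: "ws2 \<noteq> []" using w2(2) esize_pos[of e2] by auto
  let ?vs = "vs @ ws1 @ ws2"
  have i1: "?vs ! (b + length (cmpl b e1) - 1) = last ws1"
  proof -
    have e: "b + length (cmpl b e1) - 1 = length vs + (length ws1 - 1)"
      using ne1 Pl.prems w1(2) esize_pos[of e1] by (simp add: comp_len)
    have "?vs ! (length vs + (length ws1 - 1)) = ws1 ! (length ws1 - 1)"
      using ne1 by (simp add: nth_append)
    thus ?thesis using e ne1 by (simp add: last_conv_nth)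
  qed
  have i2: "?vs ! (b + length (cmpl b e1) + length (cmpl (b + length (cmpl b e1)) e2) - 1) = last ws2"
  proof -
    have e: "b + length (cmpl b e1) + length (cmpl (b + length (cmpl b e1)) e2) - 1 = length (vs @ ws1) + (length ws2 - 1)"
      using ne2 Pl.prems w1(2) w2(2) esize_pos[of e2] by (simp add: comp_len)
    have "?vs ! (length (vs@ws1) + (length ws2 - 1)) = ws2 ! (length ws2 - 1)"
      using ne2 by (simp only: append_assoc[symmetric] nth_append_length_plus)
    thus ?thesis using e ne2 by (simp add: last_conv_nth)
  qed
  let ?i = "b + length (cmpl b e1) - 1"
  let ?j = "b + length (cmpl b e1) + length (cmpl (b + length (cmpl b e1)) e2) - 1"
  have lt: "?i < length ?vs" "?j < length ?vs"
    using ne1 ne2 Pl.prems w1(2) w2(2) esize_pos[of e1] esize_pos[of e2] by (auto simp: comp_len)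
  have "run env vs (cmpl b (Pl e1 e2)) = ?vs @ [gate_val env ?vs (Add ?i ?j)]"
    by (simp only: cmpl.simps run_append w1 w2 run_single)
  also have "gate_val env ?vs (Add ?i ?j) = sem env e1 + sem env e2"
    using lt i1 i2 w1(3) w2(3) by (simp only: gate_val.simps if_True conj_absorb simp_thms)
  finally show ?case
    using w1(2) w2(2) by (intro exI[of _ "ws1 @ ws2 @ [sem env e1 + sem env e2]"]) simp

next
  case (Ti e1 e2)
  obtain ws1 where w1: "run env vs (cmpl b e1) = vs @ ws1" "length ws1 = esize e1" "last ws1 = sem env e1"
    using Ti.IH(1)[OF Ti.prems] by blast
  have l1: "length (vs @ ws1) = b + length (cmpl b e1)" using w1 Ti.prems by (simp add: comp_len)
  obtain ws2 where w2: "run env (vs @ ws1) (cmpl (b + length (cmpl b e1)) e2) = vs @ ws1 @ ws2"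
      "length ws2 = esize e2" "last ws2 = sem env e2"
    using Ti.IH(2)[OF l1] by auto
  have ne1: "ws1 \<noteq> []" using w1(2) esize_pos[of e1] by auto
  have ne2: "ws2 \<noteq> []" using w2(2) esize_pos[of e2] by auto
  let ?vs = "vs @ ws1 @ ws2"
  have i1: "?vs ! (b + length (cmpl b e1) - 1) = last ws1"
  proof -
    have e: "b + length (cmpl b e1) - 1 = length vs + (length ws1 - 1)"
      using ne1 Ti.prems w1(2) esize_pos[of e1] by (simp add: comp_len)
    have "?vs ! (length vs + (length ws1 - 1)) = ws1 ! (length ws1 - 1)"
      using ne1 by (simp add: nth_append)
    thus ?thesis using e ne1 by (simp add: last_conv_nth)
  qed
  have i2: "?vs ! (b + length (cmpl b e1) + length (cmpl (b + length (cmpl b e1)) e2) - 1) = last ws2"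
  proof -
    have e: "b + length (cmpl b e1) + length (cmpl (b + length (cmpl b e1)) e2) - 1 = length (vs @ ws1) + (length ws2 - 1)"
      using ne2 Ti.prems w1(2) w2(2) esize_pos[of e2] by (simp add: comp_len)
    have "?vs ! (length (vs@ws1) + (length ws2 - 1)) = ws2 ! (length ws2 - 1)"
      using ne2 by (simp only: append_assoc[symmetric] nth_append_length_plus)
    thus ?thesis using e ne2 by (simp add: last_conv_nth)
  qed
  let ?i = "b + length (cmpl b e1) - 1"
  let ?j = "b + length (cmpl b e1) + length (cmpl (b + length (cmpl b e1)) e2) - 1"
  have lt: "?i < length ?vs" "?j < length ?vs"
    using ne1 ne2 Ti.prems w1(2) w2(2) esize_pos[of e1] esize_pos[of e2] by (auto simp: comp_len)
  have "run env vs (cmpl b (Ti e1 e2)) = ?vs @ [gate_val env ?vs (Mul ?i ?j)]"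
    by (simp only: cmpl.simps run_append w1 w2 run_single)
  also have "gate_val env ?vs (Mul ?i ?j) = sem env e1 * sem env e2"
    using lt i1 i2 w1(3) w2(3) by (simp only: gate_val.simps if_True conj_absorb simp_thms)
  finally show ?case
    using w1(2) w2(2) by (intro exI[of _ "ws1 @ ws2 @ [sem env e1 * sem env e2]"]) simp

qed

lemma circuit_poly_comp: "circuit_poly env (cmpl 0 e) = sem env e"
proof -
  obtain ws where "run env [] (cmpl 0 e) = ws" "length ws = esize e" "last ws = sem env e"
    using comp_correct[of "[]" 0 env e] by auto
  moreover have "cmpl 0 e \<noteq> []" using comp_len[of 0 e] esize_pos[of e] by auto
  ultimately show ?thesis by (simp add: circuit_poly_def circuit_vals_def run_def)
qed

lemma circuit_size_comp: "circuit_size (cmpl 0 e) = esize e"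
  by (simp add: circuit_size_def comp_len)




lemma prod_list_upt: "prod_list (map f [0..<n]) = (\<Prod>i<n. f i)"
  by (induction n) (auto simp: mult.commute)
lemma sum_list_upt: "sum_list (map f [0..<n]) = (\<Sum>i<n. f i)"
  by (induction n) (auto simp: add.commute)

fun sumE :: "'a::zero ex list \<Rightarrow> 'a ex" where
  "sumE [] = K 0" | "sumE (e # es) = Pl e (sumE es)"
fun prodE :: "'a::one ex list \<Rightarrow> 'a ex" where
  "prodE [] = K 1" | "prodE (e # es) = Ti e (prodE es)"

lemma sem_sumE: "sem env (sumE es) = sum_list (map (sem env) es)"
  by (induction es) (auto simp: mconst_def)
lemma sem_prodE: "sem env (prodE es) = prod_list (map (sem env) es)"
  by (induction es) (auto simp: mconst_def)
lemma esize_sumE: "esize (sumE es) = 1 + (\<Sum>e\<leftarrow>es. esize e + 1)"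
  by (induction es) auto
lemma esize_prodE: "esize (prodE es) = 1 + (\<Sum>e\<leftarrow>es. esize e + 1)"
  by (induction es) auto

definition hh :: "nat \<Rightarrow> nat" where "hh d = d div 2"
definition rr :: "nat \<Rightarrow> nat" where "rr d = d + 1"
definition yv :: "nat \<Rightarrow> nat \<Rightarrow> nat \<Rightarrow> nat" where "yv d j t = 2 * (j * rr d + t)"
definition zv :: "nat \<Rightarrow> nat \<Rightarrow> nat \<Rightarrow> nat" where "zv d j t = 2 * (j * rr d + t) + 1"
definition evar :: "nat \<Rightarrow> nat" where "evar d = 2 * hh d * rr d"
definition nvf :: "nat \<Rightarrow> nat" where "nvf d = 2 * hh d * rr d + 1"

lemma idx_lt: assumes "j < hh d" "t < rr d" shows "j * rr d + t < hh d * rr d"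
proof -
  have "Suc j * rr d \<le> hh d * rr d" using assms(1) by (intro mult_le_mono1) simp
  thus ?thesis using assms(2) by simp
qed

lemma idx_inj: assumes "t < rr d" "t' < rr d" "j * rr d + t = j' * rr d + t'"
  shows "j = j' \<and> t = t'"
proof -
  have a: "j = (j * rr d + t) div rr d" using assms(1) by simp
  have b: "j' = (j' * rr d + t') div rr d" using assms(2) by simp
  have "j = j'" using a b assms(3) by simp
  thus ?thesis using assms(3) by simp
qed

lemma yv_lt: "j < hh d \<Longrightarrow> t < rr d \<Longrightarrow> yv d j t < evar d"
  using idx_lt[of j d t] unfolding yv_def evar_def by simp
lemma zv_lt: "j < hh d \<Longrightarrow> t < rr d \<Longrightarrow> zv d j t < evar d"
  using idx_lt[of j d t] unfolding zv_def evar_def by simp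
lemma evar_lt: "evar d < nvf d" by (simp add: evar_def nvf_def)

definition Edef :: "nat \<Rightarrow> 'a::comm_ring_1 ex" where
  "Edef d = prodE (map (\<lambda>j. sumE (map (\<lambda>t. Ti (V (yv d j t)) (V (zv d j t))) [0..<rr d])) [0..<hh d]
                   @ (if odd d then [V (evar d)] else []))"

definition SS :: "nat \<Rightarrow> (nat \<Rightarrow> nat) set" where
  "SS d = PiE {..<hh d} (\<lambda>_. {..<rr d})"

definition mm :: "nat \<Rightarrow> (nat \<Rightarrow> nat) \<Rightarrow> (nat \<Rightarrow>\<^sub>0 nat)" where
  "mm d \<sigma> = (\<Sum>j<hh d. Poly_Mapping.single (yv d j (\<sigma> j)) 1 + Poly_Mapping.single (zv d j (\<sigma> j)) 1)
            + (if odd d then Poly_Mapping.single (evar d) 1 else 0)"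

definition Pd :: "nat \<Rightarrow> 'a::comm_ring_1 mpoly" where
  "Pd d = (\<Sum>\<sigma>\<in>SS d. Poly_Mapping.single (mm d \<sigma>) 1)"

lemma finite_SS: "finite (SS d)" by (simp add: SS_def finite_PiE)

lemma prod_single1: "finite J \<Longrightarrow> (\<Prod>j\<in>J. Poly_Mapping.single (f j) (1::'a::comm_semiring_1)) = Poly_Mapping.single (\<Sum>j\<in>J. f j) 1"
  by (induction J rule: finite_induct) (auto simp: mult_single)

lemma mvar_mult: "mvar a * mvar b = (Poly_Mapping.single (Poly_Mapping.single a 1 + Poly_Mapping.single b 1) 1 :: 'a::comm_ring_1 mpoly)"
  by (simp add: mvar_def mult_single)






lemma sem_Edef:
  assumes "\<And>i. i < nvf d \<Longrightarrow> env i = mvar i"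
  shows "sem env (Edef d) = (Pd d :: 'a::comm_ring_1 mpoly)"
proof -
  have yz: "env (yv d j t) = mvar (yv d j t)" "env (zv d j t) = mvar (zv d j t)"
    if "j < hh d" "t < rr d" for j t
    using assms yv_lt[OF that] zv_lt[OF that] evar_lt[of d] by auto
  have ee: "env (evar d) = mvar (evar d)" using assms evar_lt by auto
  define X :: "'a mpoly" where "X = (if odd d then mvar (evar d) else 1)"
  have X: "X = Poly_Mapping.single (if odd d then Poly_Mapping.single (evar d) 1 else 0) 1"
    by (simp add: X_def mvar_def)
  have "sem env (Edef d) = (\<Prod>j<hh d. \<Sum>t<rr d. mvar (yv d j t) * mvar (zv d j t)) * X"
    unfolding Edef_def sem_prodE map_append prod_list.append map_map o_def sem_sumE sem.simps
      sum_list_upt prod_list_upt X_def using yz ee by simp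
  also have "\<dots> = (\<Sum>\<sigma>\<in>SS d. \<Prod>j<hh d. mvar (yv d j (\<sigma> j)) * mvar (zv d j (\<sigma> j))) * X"
    by (simp add: SS_def prod_sum_PiE)
  also have "\<dots> = Pd d"
    unfolding Pd_def sum_distrib_right
    by (rule sum.cong) (simp_all add: mvar_mult prod_single1 X mult_single mm_def)
  finally show ?thesis .
qed






lemma meval_Pd:
  "meval (Pd d) x = (\<Prod>j<hh d. \<Sum>t<rr d. x (yv d j t) * x (zv d j t)) * (if odd d then x (evar d) else 1)"
proof -
  have "meval (Pd d) x = (\<Sum>\<sigma>\<in>SS d. mmono (mm d \<sigma>) x)"
    by (simp add: Pd_def meval_sum[OF finite_SS] meval_single)
  also have "\<dots> = (\<Sum>\<sigma>\<in>SS d. (\<Prod>j<hh d. x (yv d j (\<sigma> j)) * x (zv d j (\<sigma> j))) * (if odd d then x (evar d) else 1))"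
    by (rule sum.cong) (simp_all add: mm_def mmono_add mmono_sum mmono_single mmono_single[simplified] mmono_zero)
  also have "\<dots> = (\<Prod>j<hh d. \<Sum>t<rr d. x (yv d j t) * x (zv d j t)) * (if odd d then x (evar d) else 1)"
    by (simp add: SS_def prod_sum_PiE sum_distrib_right)
  finally show ?thesis .
qed






lemma keys_Pd: "Poly_Mapping.keys (Pd d :: 'a::comm_ring_1 mpoly) \<subseteq> mm d ` SS d"
proof
  fix m assume m: "m \<in> Poly_Mapping.keys (Pd d :: 'a mpoly)"
  show "m \<in> mm d ` SS d"
  proof (rule ccontr)
    assume "m \<notin> mm d ` SS d"
    hence "Poly_Mapping.lookup (Pd d :: 'a mpoly) m = 0"
      unfolding Pd_def lookup_sum by (intro sum.neutral) (auto simp: lookup_single when_def)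
    thus False using m by (simp add: in_keys_iff)
  qed
qed

lemma mon_degree_mm: "mon_degree (mm d \<sigma>) = d"
proof -
  have "mon_degree (mm d \<sigma>) = 2 * hh d + (if odd d then 1 else 0)"
    by (simp add: mm_def mon_degree_add mon_degree_sum mon_degree_single mon_degree_single[simplified] mon_degree_zero)
  thus ?thesis by (simp add: hh_def)
qed

lemma keys_pair: "Poly_Mapping.keys (Poly_Mapping.single a (1::nat) + Poly_Mapping.single b 1) \<subseteq> {a, b}"
  using keys_add[of "Poly_Mapping.single a (1::nat)" "Poly_Mapping.single b 1"] by (simp add: insert_commute)

lemma keys_mm: "\<sigma> \<in> SS d \<Longrightarrow> Poly_Mapping.keys (mm d \<sigma>) \<subseteq> {..<nvf d}"
proof
  fix i assume s: "\<sigma> \<in> SS d" and i: "i \<in> Poly_Mapping.keys (mm d \<sigma>)"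
  let ?S = "\<Sum>j<hh d. Poly_Mapping.single (yv d j (\<sigma> j)) (1::nat) + Poly_Mapping.single (zv d j (\<sigma> j)) 1"
  let ?E = "if odd d then Poly_Mapping.single (evar d) (1::nat) else 0"
  have "i \<in> Poly_Mapping.keys ?S \<union> Poly_Mapping.keys ?E"
    using i keys_add[of ?S ?E] unfolding mm_def by blast
  thus "i \<in> {..<nvf d}"
  proof
    assume "i \<in> Poly_Mapping.keys ?S"
    then obtain j where j: "j < hh d" and "i \<in> Poly_Mapping.keys (Poly_Mapping.single (yv d j (\<sigma> j)) (1::nat) + Poly_Mapping.single (zv d j (\<sigma> j)) 1)"
      using keys_sum[of "\<lambda>j. Poly_Mapping.single (yv d j (\<sigma> j)) (1::nat) + Poly_Mapping.single (zv d j (\<sigma> j)) 1" "{..<hh d}"]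
      by (meson UN_E lessThan_iff subsetD)
    hence "i = yv d j (\<sigma> j) \<or> i = zv d j (\<sigma> j)" using keys_pair[of "yv d j (\<sigma> j)" "zv d j (\<sigma> j)"] by blast
    moreover have "\<sigma> j < rr d" using s j by (auto simp: SS_def PiE_def Pi_def)
    ultimately have "i < evar d" using yv_lt[OF j] zv_lt[OF j] by blast
    thus ?thesis using evar_lt[of d] by simp
  next
    assume "i \<in> Poly_Mapping.keys ?E"
    hence "i = evar d" by (auto split: if_splits)
    thus ?thesis using evar_lt[of d] by simp
  qed
qed




definition fsc :: "'a::field \<Rightarrow> ('b \<Rightarrow> 'a) \<Rightarrow> ('b \<Rightarrow> 'a)" where
  "fsc c f = (\<lambda>x. c * f x)"

lemma vs_fsc: "vector_space (fsc :: 'a::field \<Rightarrow> ('b \<Rightarrow> 'a) \<Rightarrow> ('b \<Rightarrow> 'a))"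
  by unfold_locales (auto simp: fsc_def fun_eq_iff algebra_simps)

lemma mod_fsc: "module (fsc :: 'a::field \<Rightarrow> ('b \<Rightarrow> 'a) \<Rightarrow> ('b \<Rightarrow> 'a))"
  using vs_fsc by (simp add: module_iff_vector_space)

lemma sum_fun_apply: "(\<Sum>i\<in>A. f i) x = (\<Sum>i\<in>A. f i x)"
  by (induction A rule: infinite_finite_induct) auto

lemma rank_bound:
  fixes R :: "'i \<Rightarrow> ('b \<Rightarrow> 'a::field)" and G :: "('b \<Rightarrow> 'a) set"
  assumes fI: "finite I" and fG: "finite G"
    and sp: "\<And>i. i \<in> I \<Longrightarrow> R i \<in> module.span fsc G"
    and dl: "\<And>i j. i \<in> I \<Longrightarrow> j \<in> I \<Longrightarrow> R i (pts j) = (if i = j then 1 else 0)"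
  shows "card I \<le> card G"
proof -
  have inj: "inj_on R I"
  proof
    fix i j assume ij: "i \<in> I" "j \<in> I" "R i = R j"
    show "i = j"
    proof (rule ccontr)
      assume "i \<noteq> j"
      hence "R i (pts i) \<noteq> R j (pts i)" using dl[of i i] dl[of j i] ij by simp
      thus False using ij by simp
    qed
  qed
  have ind: "\<not> module.dependent fsc (R ` I)"
  proof
    assume "module.dependent fsc (R ` I)"
    then obtain u where u: "\<exists>v\<in>R ` I. u v \<noteq> 0" "(\<Sum>v\<in>R ` I. fsc (u v) v) = 0"
      using module.dependent_finite[OF mod_fsc, of "R ` I"] fI by auto
    have "u (R j) = 0" if j: "j \<in> I" for j
    proof -
      have "0 = (\<Sum>v\<in>R ` I. fsc (u v) v) (pts j)" using u(2) by simp
      also have "\<dots> = (\<Sum>i\<in>I. u (R i) * R i (pts j))"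
        by (simp add: sum_fun_apply sum.reindex[OF inj] fsc_def)
      also have "\<dots> = (\<Sum>i\<in>I. if i = j then u (R j) else 0)"
        by (rule sum.cong) (use dl j in auto)
      also have "\<dots> = u (R j)" using j fI by simp
      finally show ?thesis by simp
    qed
    thus False using u(1) by auto
  qed
  have "finite (R ` I) \<and> card (R ` I) \<le> card G"
    by (rule vector_space.independent_span_bound[OF vs_fsc fG])
       (use ind sp in \<open>auto simp: module_iff_vector_space\<close>)
  thus ?thesis using card_image[OF inj] by simp
qed




definition combine :: "nat set \<Rightarrow> (nat \<Rightarrow> 'a) \<Rightarrow> (nat \<Rightarrow> 'a) \<Rightarrow> nat \<Rightarrow> 'a" where
  "combine Y \<alpha> \<beta> i = (if i \<in> Y then \<alpha> i else \<beta> i)"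

definition aL :: "nat \<Rightarrow> nat set \<Rightarrow> 'a::comm_ring_1 affine \<Rightarrow> (nat \<Rightarrow> 'a) \<Rightarrow> 'a" where
  "aL n Y L \<alpha> = (\<Sum>i<n. if i \<in> Y then snd L i * \<alpha> i else 0)"
definition bL :: "nat \<Rightarrow> nat set \<Rightarrow> 'a::comm_ring_1 affine \<Rightarrow> (nat \<Rightarrow> 'a) \<Rightarrow> 'a" where
  "bL n Y L \<beta> = fst L + (\<Sum>i<n. if i \<in> Y then 0 else snd L i * \<beta> i)"

lemma affine_split: "affine_eval n L (combine Y \<alpha> \<beta>) = aL n Y L \<alpha> + bL n Y L \<beta>"
proof -
  have "(\<Sum>i<n. snd L i * combine Y \<alpha> \<beta> i) =
        (\<Sum>i<n. (if i \<in> Y then snd L i * \<alpha> i else 0) + (if i \<in> Y then 0 else snd L i * \<beta> i))"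
    by (rule sum.cong) (auto simp: combine_def)
  thus ?thesis by (simp add: affine_eval_def aL_def bL_def sum.distrib algebra_simps)
qed

lemma prod_list_nth: "prod_list (map f xs) = (\<Prod>i<length xs. f (xs ! i))"
  by (induction xs) (simp_all del: prod.lessThan_Suc add: prod.lessThan_Suc_shift)

lemma sum_list_nth: "sum_list (map f xs) = (\<Sum>i<length xs. f (xs ! i))"
  by (induction xs) (simp_all del: sum.lessThan_Suc add: sum.lessThan_Suc_shift)

definition Gset :: "nat \<Rightarrow> nat set \<Rightarrow> 'a::comm_ring_1 sps \<Rightarrow> ((nat \<Rightarrow> 'a) \<Rightarrow> 'a) set" where
  "Gset n Y C = (\<lambda>(k,T). \<lambda>\<beta>. \<Prod>i\<in>{..<length (C!k)} - T. bL n Y (C!k!i) \<beta>)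
                  ` (SIGMA k:{..<length C}. Pow {..<length (C!k)})"

lemma row_span:
  fixes C :: "'a::field sps"
  shows "(\<lambda>\<beta>. sps_eval n C (combine Y \<alpha> \<beta>)) \<in> module.span fsc (Gset n Y C)"
proof -
  let ?A = "SIGMA k:{..<length C}. Pow {..<length (C!k)}"
  let ?g = "\<lambda>(k,T). \<lambda>\<beta>. \<Prod>i\<in>{..<length (C!k)} - T. bL n Y (C!k!i) \<beta>"
  let ?c = "\<lambda>(k,T). \<Prod>i\<in>T. aL n Y (C!k!i) \<alpha>"
  have eq: "(\<lambda>\<beta>. sps_eval n C (combine Y \<alpha> \<beta>)) = (\<Sum>kT\<in>?A. fsc (?c kT) (?g kT))"
  proof
    fix \<beta>
    have "sps_eval n C (combine Y \<alpha> \<beta>) =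
          (\<Sum>k<length C. \<Prod>i<length (C!k). aL n Y (C!k!i) \<alpha> + bL n Y (C!k!i) \<beta>)"
      by (simp add: sps_eval_def sum_list_nth prod_list_nth affine_split)
    also have "\<dots> = (\<Sum>k<length C. \<Sum>T\<in>Pow {..<length (C!k)}.
                      (\<Prod>i\<in>T. aL n Y (C!k!i) \<alpha>) * (\<Prod>i\<in>{..<length (C!k)} - T. bL n Y (C!k!i) \<beta>))"
      by (simp add: prod_add)
    also have "\<dots> = (\<Sum>kT\<in>?A. ?c kT * ?g kT \<beta>)"
      by (subst sum.Sigma) (auto simp: case_prod_beta)
    also have "\<dots> = (\<Sum>kT\<in>?A. fsc (?c kT) (?g kT)) \<beta>"
      by (simp add: sum_fun_apply fsc_def)
    finally show "sps_eval n C (combine Y \<alpha> \<beta>) = (\<Sum>kT\<in>?A. fsc (?c kT) (?g kT)) \<beta>" .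
  qed
  show ?thesis unfolding eq
    by (intro module.span_sum[OF mod_fsc] module.span_scale[OF mod_fsc] module.span_base[OF mod_fsc])
       (auto simp: Gset_def)
qed

lemma finite_Gset: "finite (Gset n Y C)"
  by (simp add: Gset_def)

lemma card_Gset:
  assumes "\<And>p. p \<in> set C \<Longrightarrow> length p \<le> D"
  shows "card (Gset n Y C) \<le> length C * 2 ^ D"
proof -
  have "card (Gset n Y C) \<le> card (SIGMA k:{..<length C}. Pow {..<length (C!k)})"
    unfolding Gset_def by (rule card_image_le) simp
  also have "\<dots> = (\<Sum>k<length C. 2 ^ length (C!k))"
    by (simp add: card_SigmaI card_Pow)
  also have "\<dots> \<le> (\<Sum>k<length C. (2::nat) ^ D)"
    by (rule sum_mono) (use assms in \<open>auto intro: power_increasing\<close>)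
  also have "\<dots> = length C * 2 ^ D" by simp
  finally show ?thesis .
qed




definition Yd :: "nat \<Rightarrow> nat set" where "Yd d = {i. even i \<and> i < evar d}"
definition alp :: "nat \<Rightarrow> (nat \<Rightarrow> nat) \<Rightarrow> nat \<Rightarrow> 'a::comm_ring_1" where
  "alp d \<sigma> i = (if \<exists>j<hh d. i = yv d j (\<sigma> j) then 1 else 0)"
definition bet :: "nat \<Rightarrow> (nat \<Rightarrow> nat) \<Rightarrow> nat \<Rightarrow> 'a::comm_ring_1" where
  "bet d \<tau> i = (if i = evar d \<or> (\<exists>j<hh d. i = zv d j (\<tau> j)) then 1 else 0)"

lemma SS_lt: "\<sigma> \<in> SS d \<Longrightarrow> j < hh d \<Longrightarrow> \<sigma> j < rr d"
  by (auto simp: SS_def PiE_def Pi_def)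

lemma yv_eq: "t < rr d \<Longrightarrow> t' < rr d \<Longrightarrow> yv d j t = yv d j' t' \<longleftrightarrow> j = j' \<and> t = t'"
  using idx_inj[of t d t' j j'] by (auto simp: yv_def)
lemma zv_eq: "t < rr d \<Longrightarrow> t' < rr d \<Longrightarrow> zv d j t = zv d j' t' \<longleftrightarrow> j = j' \<and> t = t'"
  using idx_inj[of t d t' j j'] by (auto simp: zv_def)

lemma x01: "\<forall>i. combine Y (alp d \<sigma>) (bet d \<tau>) i \<in> {0, 1::'a::comm_ring_1}"
  by (auto simp: combine_def alp_def bet_def)

lemma eval_delta:
  assumes s: "\<sigma> \<in> SS d" and t: "\<tau> \<in> SS d"
  shows "meval (Pd d) (combine (Yd d) (alp d \<sigma>) (bet d \<tau>)) = (if \<sigma> = \<tau> then 1 else (0::'a::field))"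
proof -
  let ?x = "combine (Yd d) (alp d \<sigma>) (bet d \<tau>) :: nat \<Rightarrow> 'a"
  have xy: "?x (yv d j u) = (if u = \<sigma> j then 1 else 0)" if "j < hh d" "u < rr d" for j u
  proof -
    have "yv d j u \<in> Yd d" using yv_lt[OF that] by (simp add: Yd_def yv_def)
    moreover have "(\<exists>j'<hh d. yv d j u = yv d j' (\<sigma> j')) \<longleftrightarrow> u = \<sigma> j"
    proof
      assume "\<exists>j'<hh d. yv d j u = yv d j' (\<sigma> j')"
      then obtain j' where j': "j' < hh d" "yv d j u = yv d j' (\<sigma> j')" by blast
      show "u = \<sigma> j" using yv_eq[OF that(2) SS_lt[OF s j'(1)]] j' by simp
    next
      assume "u = \<sigma> j" thus "\<exists>j'<hh d. yv d j u = yv d j' (\<sigma> j')" using that(1) by blast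
    qed
    ultimately show ?thesis by (simp add: combine_def alp_def)
  qed
  have xz: "?x (zv d j u) = (if u = \<tau> j then 1 else 0)" if "j < hh d" "u < rr d" for j u
  proof -
    have "zv d j u \<notin> Yd d" by (simp add: Yd_def zv_def)
    moreover have "zv d j u \<noteq> evar d" using zv_lt[OF that] by simp
    moreover have "(\<exists>j'<hh d. zv d j u = zv d j' (\<tau> j')) \<longleftrightarrow> u = \<tau> j"
    proof
      assume "\<exists>j'<hh d. zv d j u = zv d j' (\<tau> j')"
      then obtain j' where j': "j' < hh d" "zv d j u = zv d j' (\<tau> j')" by blast
      show "u = \<tau> j" using zv_eq[OF that(2) SS_lt[OF t j'(1)]] j' by simp
    next
      assume "u = \<tau> j" thus "\<exists>j'<hh d. zv d j u = zv d j' (\<tau> j')" using that(1) by blast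
    qed
    ultimately show ?thesis by (simp add: combine_def bet_def)
  qed
  have xe: "?x (evar d) = 1" by (simp add: combine_def bet_def Yd_def)
  have inner: "(\<Sum>u<rr d. ?x (yv d j u) * ?x (zv d j u)) = (if \<sigma> j = \<tau> j then 1 else 0)"
    if j: "j < hh d" for j
  proof -
    have "(\<Sum>u<rr d. ?x (yv d j u) * ?x (zv d j u)) =
          (\<Sum>u<rr d. if u = \<sigma> j then (if \<sigma> j = \<tau> j then 1 else 0) else 0)"
      by (rule sum.cong) (auto simp: xy[OF j] xz[OF j])
    also have "\<dots> = (if \<sigma> j = \<tau> j then 1 else 0)" using SS_lt[OF s j] by simp
    finally show ?thesis .
  qed
  have "meval (Pd d) ?x = (\<Prod>j<hh d. if \<sigma> j = \<tau> j then 1 else (0::'a))"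
    by (simp add: meval_Pd inner xe)
  also have "\<dots> = (if \<sigma> = \<tau> then 1 else 0)"
  proof (cases "\<sigma> = \<tau>")
    case True thus ?thesis by simp
  next
    case False
    then obtain j where "\<sigma> j \<noteq> \<tau> j" by auto
    moreover have "j < hh d"
    proof (rule ccontr)
      assume "\<not> j < hh d"
      hence "\<sigma> j = undefined" "\<tau> j = undefined" using s t by (auto simp: SS_def PiE_def extensional_def)
      thus False using \<open>\<sigma> j \<noteq> \<tau> j\<close> by simp
    qed
    ultimately have "(\<Prod>j<hh d. if \<sigma> j = \<tau> j then 1 else (0::'a)) = 0"
      by (intro prod_zero) auto
    thus ?thesis using False by simp
  qed
  finally show ?thesis .
qed

lemma card_SS: "card (SS d) = rr d ^ hh d"
  by (simp add: SS_def card_PiE)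

lemma main_bound:
  fixes C :: "'a::field sps"
  assumes fe: "functionally_equiv (nvf d) C (Pd d)" and fd: "sps_formal_degree C = d"
  shows "rr d ^ hh d \<le> length C * 2 ^ d"
proof -
  let ?R = "\<lambda>\<sigma>. \<lambda>\<beta>. sps_eval (nvf d) C (combine (Yd d) (alp d \<sigma>) \<beta>) :: 'a"
  have "card (SS d) \<le> card (Gset (nvf d) (Yd d) C)"
  proof (rule rank_bound[where I="SS d" and R="?R" and pts="bet d"])
    show "finite (SS d)" by (rule finite_SS)
    show "finite (Gset (nvf d) (Yd d) C)" by (rule finite_Gset)
    show "?R \<sigma> \<in> module.span fsc (Gset (nvf d) (Yd d) C)" for \<sigma> by (rule row_span)
    show "?R \<sigma> (bet d \<tau>) = (if \<sigma> = \<tau> then 1 else 0)" if "\<sigma> \<in> SS d" "\<tau> \<in> SS d" for \<sigma> \<tau>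
    proof -
      have "sps_eval (nvf d) C (combine (Yd d) (alp d \<sigma>) (bet d \<tau>)) = meval (Pd d) (combine (Yd d) (alp d \<sigma>) (bet d \<tau>))"
        using fe x01[of "Yd d" d \<sigma> \<tau>] unfolding functionally_equiv_def by blast
      thus ?thesis using eval_delta[OF that] by simp
    qed
  qed
  also have "\<dots> \<le> length C * 2 ^ d"
  proof (rule card_Gset)
    fix p assume "p \<in> set C"
    hence "length p \<le> Max (insert 0 (length ` set C))" by (intro Max_ge) auto
    thus "length p \<le> d" using fd unfolding sps_formal_degree_def by simp
  qed
  finally show ?thesis by (simp add: card_SS)
qed




lemma nvf_le: "nvf d \<le> (d + 1) ^ 2"
proof -
  have "2 * hh d \<le> d" by (simp add: hh_def)
  hence "2 * hh d * rr d \<le> d * (d + 1)" unfolding rr_def by (rule mult_le_mono1)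
  thus ?thesis by (simp add: nvf_def power2_eq_square algebra_simps)
qed

lemma d_le_nvf: "d \<le> nvf d"
proof (cases "d \<le> 1")
  case True thus ?thesis by (auto simp: nvf_def)
next
  case False
  hence "hh d \<ge> 1" by (simp add: hh_def)
  hence "2 * hh d * rr d \<ge> 2 * rr d" by simp
  thus ?thesis by (simp add: nvf_def rr_def)
qed

lemma nvf_pos: "nvf d \<ge> 1" by (simp add: nvf_def)

lemma esize_Edef: "esize (Edef d :: 'a::comm_ring_1 ex) \<le> (d + 1) ^ 4"
proof -
  have inner: "esize (sumE (map (\<lambda>t. Ti (V (yv d j t)) (V (zv d j t))) [0..<rr d]) :: 'a ex) = 1 + 4 * rr d" for j
    by (simp add: esize_sumE sum_list_upt o_def)
  have "esize (Edef d :: 'a ex) = 1 + hh d * (4 * rr d + 2) + (if odd d then 2 else 0)"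
    by (simp add: Edef_def esize_prodE o_def inner sum_list_upt)
  also have "\<dots> \<le> (d + 1) ^ 4"
  proof (cases "d = 0")
    case True thus ?thesis by (simp add: hh_def)
  next
    case False
    have a: "hh d * (4 * rr d + 2) \<le> d * (4 * d + 6)"
      by (intro mult_mono) (auto simp: hh_def rr_def)
    have "(2::nat) ^ 2 \<le> (d + 1) ^ 2" using False by (intro power_mono) auto
    hence "(4::nat) \<le> (d + 1) ^ 2" by simp
    hence "4 * (d + 1) ^ 2 \<le> (d + 1) ^ 2 * (d + 1) ^ 2" by (rule mult_right_mono) simp
    also have "\<dots> = (d + 1) ^ 4" by (simp flip: power_add)
    finally have b: "4 * (d + 1) ^ 2 \<le> (d + 1) ^ 4" .
    have c: "d * (4 * d + 6) + 3 \<le> 4 * (d + 1) ^ 2" by (simp add: power2_eq_square algebra_simps)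
    show ?thesis using a b c by simp
  qed
  finally show ?thesis .
qed

lemma numeric:
  fixes d h nv L S :: nat
  assumes d: "d \<ge> 255" and hd: "2 * h + 1 \<ge> d"
    and main: "(d + 1) ^ h \<le> L * 2 ^ d" and nvle: "nv \<le> (d + 1) ^ 2" and nvp: "nv \<ge> 1"
    and LS: "L \<le> S"
  shows "exp (1/8 * real d * ln (real nv)) \<le> real S"
proof -
  define Lg where "Lg = ln (real d + 1)"
  have Lpos: "0 < Lg" unfolding Lg_def using d by simp
  have "ln ((2::real) ^ 8) \<le> Lg" unfolding Lg_def using d by (subst ln_le_cancel_iff) auto
  moreover have "ln ((2::real) ^ 8) = 8 * ln 2" by (simp only: ln_realpow)
  ultimately have l2: "8 * ln 2 \<le> Lg" by simp
  have nvr: "real nv \<le> (real d + 1) ^ 2" proof -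
    have "real nv \<le> real ((d + 1) ^ 2)" using nvle by (simp only: of_nat_le_iff)
    thus ?thesis by (simp add: add.commute)
  qed
  have "ln (real nv) \<le> ln ((real d + 1) ^ 2)" using nvp nvr by (subst ln_le_cancel_iff) auto
  hence nvln: "ln (real nv) \<le> 2 * Lg" by (simp add: ln_realpow Lg_def)
  have A: "exp (1/8 * real d * ln (real nv)) \<le> exp (1/8 * real d * (2 * Lg))"
  proof -
    have "real d * ln (real nv) \<le> real d * (2 * Lg)" using nvln by (intro mult_left_mono) auto
    thus ?thesis by (simp add: mult_ac)
  qed
  have hr: "real d \<le> 2 * real h + 1" using hd by linarith
  have f1: "real d * Lg \<le> (2 * real h + 1) * Lg" using hr Lpos by (intro mult_right_mono) auto
  have f2: "real d * (8 * ln 2) \<le> real d * Lg" using l2 by (intro mult_left_mono) auto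
  have f3: "4 * Lg \<le> real d * Lg" using d Lpos by (intro mult_right_mono) auto
  have B: "1/8 * real d * (2 * Lg) \<le> real h * Lg - real d * ln 2"
    using f1 f2 f3 by (simp add: algebra_simps)
  have e1: "exp (real h * Lg) = (real d + 1) ^ h"
    by (simp add: exp_of_nat_mult Lg_def)
  have e2: "exp (real d * ln 2) = 2 ^ d"
    by (simp add: exp_of_nat_mult)
  have C: "exp (real h * Lg - real d * ln 2) = (real d + 1) ^ h / 2 ^ d"
    by (simp add: exp_diff e1 e2)
  have "(real d + 1) ^ h \<le> real L * 2 ^ d" 
  proof -
    have "real ((d + 1) ^ h) \<le> real (L * 2 ^ d)" using main by (simp only: of_nat_le_iff)
    thus ?thesis by (simp add: add.commute)
  qed
  hence D: "(real d + 1) ^ h / 2 ^ d \<le> real L" by (simp add: divide_le_eq)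
  have "exp (1/8 * real d * ln (real nv)) \<le> exp (real h * Lg - real d * ln 2)"
    using A B exp_le_cancel_iff[of "1/8 * real d * (2 * Lg)" "real h * Lg - real d * ln 2"] by linarith
  also have "\<dots> \<le> real L" using C D by simp
  also have "\<dots> \<le> real S" using LS by simp
  finally show ?thesis .
qed


lemma bool_vecs0: "bool_vecs 0 = {\<lambda>_. False}"
  by (auto simp: bool_vecs_def)

lemma SS_ne: "SS d \<noteq> {}"
proof
  assume "SS d = {}"
  hence "card (SS d) = 0" by simp
  thus False by (simp add: card_SS rr_def)
qed

lemma total_degree_Pd: "total_degree (Pd d :: 'a::field mpoly) = d"
proof -
  obtain \<sigma> where s: "\<sigma> \<in> SS d" using SS_ne by blast
  have "meval (Pd d :: 'a mpoly) (combine (Yd d) (alp d \<sigma>) (bet d \<sigma>)) = 1"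
    using eval_delta[OF s s] by simp
  hence ne: "Poly_Mapping.keys (Pd d :: 'a mpoly) \<noteq> {}"
    by (auto simp: meval_def)
  have "mon_degree ` Poly_Mapping.keys (Pd d :: 'a mpoly) = {d}"
  proof
    show "mon_degree ` Poly_Mapping.keys (Pd d :: 'a mpoly) \<subseteq> {d}"
      using keys_Pd[where 'a='a, of d] mon_degree_mm by auto
    show "{d} \<subseteq> mon_degree ` Poly_Mapping.keys (Pd d :: 'a mpoly)"
    proof -
      obtain m where m: "m \<in> Poly_Mapping.keys (Pd d :: 'a mpoly)" using ne by blast
      then obtain \<tau> where "m = mm d \<tau>" using keys_Pd[where 'a='a, of d] by blast
      thus ?thesis using m mon_degree_mm[of d \<tau>] by (metis empty_subsetI image_eqI insert_subset)
    qed
  qed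
  thus ?thesis by (simp add: total_degree_def)
qed

lemma mvars_Pd: "mvars (Pd d :: 'a::comm_ring_1 mpoly) \<subseteq> {..<nvf d}"
  unfolding mvars_def using keys_Pd[where 'a='a, of d] keys_mm by blast

lemma in_VNP_Pd: "in_VNP nvf (Pd :: nat \<Rightarrow> 'a::field mpoly)"
  unfolding in_VNP_def
proof (intro exI[of _ "4::nat"] exI[of _ "\<lambda>_. 0"] exI[of _ "\<lambda>d. cmpl 0 (Edef d :: 'a ex)"] allI conjI)
  fix d :: nat
  have p24: "(d + 1) ^ 2 \<le> (d + 1) ^ 4" by (rule power_increasing) auto
  have dle: "d \<le> (d + 1) ^ 4"
  proof -
    have "d + 1 \<le> (d + 1) ^ 4" by (rule self_le_power) auto
    thus ?thesis by simp
  qed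
  show "nvf d \<le> (d + 1) ^ 4" using nvf_le[of d] p24 by linarith
  show "(\<lambda>_. 0::nat) d \<le> (d + 1) ^ 4" by simp
  show "circuit_size (cmpl 0 (Edef d :: 'a ex)) \<le> (d + 1) ^ 4"
    unfolding circuit_size_comp by (rule esize_Edef)
  have "circuit_poly mvar (cmpl 0 (Edef d :: 'a ex)) = Pd d"
    by (simp add: circuit_poly_comp sem_Edef)
  thus "total_degree (circuit_poly mvar (cmpl 0 (Edef d :: 'a ex))) \<le> (d + 1) ^ 4"
    using total_degree_Pd[where 'a='a, of d] dle by simp
  have cpF: "circuit_poly (\<lambda>i. if i < nvf d then mvar i else if (\<lambda>_. False) (i - nvf d) then 1 else 0)
          (cmpl 0 (Edef d :: 'a ex)) = Pd d"
    by (simp only: circuit_poly_comp) (rule sem_Edef, simp)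
  show "Pd d = (\<Sum>b\<in>bool_vecs ((\<lambda>_. 0) d).
                 circuit_poly (\<lambda>i. if i < nvf d then mvar i
                                    else if b (i - nvf d) then 1 else 0) (cmpl 0 (Edef d :: 'a ex)))"
  proof -
    have bv: "bool_vecs ((\<lambda>_. 0::nat) d) = {\<lambda>_. False}" by (simp add: bool_vecs0)
    show ?thesis unfolding bv using cpF by simp
  qed
qed

theorem theorem1p6:
  shows "\<exists>(P :: nat \<Rightarrow> 'a::field mpoly) (nv :: nat \<Rightarrow> nat).
     in_VNP nv P \<and>
     (\<exists>k::nat. \<forall>d. d \<le> (nv d) ^ k \<and> nv d \<le> (d + 1) ^ k) \<and>
     (\<forall>d. total_degree (P d) = d \<and> mvars (P d) \<subseteq> {..<nv d}) \<and>
     (\<exists>c::real. c > 0 \<and> (\<exists>d0. \<forall>d\<ge>d0. \<forall>C :: 'a sps.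
        sps_formal_degree C = d \<and> functionally_equiv (nv d) C (P d) \<longrightarrow>
        real (sps_size C) \<ge> exp (c * real d * ln (real (nv d)))))"
proof (intro exI[of _ Pd] exI[of _ nvf] conjI)
  show "in_VNP nvf (Pd :: nat \<Rightarrow> 'a mpoly)" by (rule in_VNP_Pd)
  show "\<exists>k::nat. \<forall>d. d \<le> (nvf d) ^ k \<and> nvf d \<le> (d + 1) ^ k"
  proof (intro exI[of _ "4::nat"] allI conjI)
    fix d :: nat
    have "nvf d \<le> nvf d ^ 4" by (rule self_le_power) (use nvf_pos[of d] in auto)
    thus "d \<le> nvf d ^ 4" using d_le_nvf[of d] by linarith
    have "(d + 1) ^ 2 \<le> (d + 1) ^ 4" by (rule power_increasing) auto
    thus "nvf d \<le> (d + 1) ^ 4" using nvf_le[of d] by linarith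
  qed
  show "\<forall>d. total_degree (Pd d :: 'a mpoly) = d \<and> mvars (Pd d :: 'a mpoly) \<subseteq> {..<nvf d}"
    using total_degree_Pd mvars_Pd by blast
  show "\<exists>c::real. c > 0 \<and> (\<exists>d0. \<forall>d\<ge>d0. \<forall>C :: 'a sps.
        sps_formal_degree C = d \<and> functionally_equiv (nvf d) C (Pd d) \<longrightarrow>
        real (sps_size C) \<ge> exp (c * real d * ln (real (nvf d))))"
  proof (intro exI[of _ "1/8::real"] conjI)
    show "(0::real) < 1/8" by simp
    show "\<exists>d0. \<forall>d\<ge>d0. \<forall>C :: 'a sps.
        sps_formal_degree C = d \<and> functionally_equiv (nvf d) C (Pd d) \<longrightarrow>
        real (sps_size C) \<ge> exp (1/8 * real d * ln (real (nvf d)))"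
    proof (intro exI[of _ "255::nat"] allI impI)
    fix d :: nat and C :: "'a sps"
    assume d: "255 \<le> d" and h: "sps_formal_degree C = d \<and> functionally_equiv (nvf d) C (Pd d)"
    have mb: "rr d ^ hh d \<le> length C * 2 ^ d" using main_bound h by blast
    have hd: "2 * hh d + 1 \<ge> d" by (simp add: hh_def)
    have LS: "length C \<le> sps_size C" by (simp add: sps_size_def)
    show "exp (1/8 * real d * ln (real (nvf d))) \<le> real (sps_size C)"
      by (rule numeric[OF d hd _ nvf_le nvf_pos LS]) (use mb in \<open>simp add: rr_def\<close>)
    qed
  qed
qed


end
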